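(* Let $\vec\psi$ satisfy (H1) and let $\mu$ be a unimodular probability measure on $\mathcal T_*$. For every compact region $K$ of $(\beta,B)$ there is a deterministic $C<\infty$ such that for $(\beta,B)\in K$ and $T\in\mathcal T_*$: (a) $|\Phi_T(\beta,B,h)|\le C(D_o^2+1)$ for every $h\in\mathcal H^\star_\mu(\beta,B)$; (b) if moreover $\psi>0$ everywhere, then $|\Phi_T(\beta,B,h)|\le C(D_o+1)$ for every message $h$. Consequently, on compact regions, $\Phi_\mu$ is uniformly bounded on $\mathcal H^\star_\mu$ whenever $\mathbb E_\mu[D_o^2]<\infty$, and, if $\psi>0$, uniformly bounded on all messages whenever $\mathbb E_\mu[D_o]<\infty$.
   Context: $\mathcal T_*$: rooted locally finite trees $(T,o)$ up to isomorphism; $\partial v$ neighbours, $D_v=|\partial v|$. A measure $\mu$ on rooted graphs is unimodular if $\mathbb E_\mu[\sum_x f(T,o,x)]=\mathbb E_\mu[\sum_x f(T,x,o)]$ for all nonnegative Borel $f$ on doubly-rooted graphs. $\mathcal T_\to$: trees rooted at a directed edge; $\mu^\uparrow$: law of $(T,J\to o)$, $T\sim\mu$ conditioned on $D_o\ge1$, $J$ uniform on $\partial o$. Specification: finite $\mathscr X$, symmetric $\psi^\beta:\mathscr X^2\to[0,\infty)$, $\bar\psi^B:\mathscr X\to[0,\infty)$; $\xi=\log\psi$, $\bar\xi=\log\bar\psi$. (H1): $\bar\psi^B>0$; some $\sigma^{\mathrm{perm}}$ has $\min_\sigma\psi^\beta(\sigma,\sigma^{\mathrm{perm}})>0$; $\bar\xi^B(\sigma)$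 is $C^1$ in $B$; each $\xi^\beta(\sigma,\sigma')$ is $\equiv-\infty$ or finite and $C^1$ in $\beta$. A message is a measurable $(T,x\to y)\mapsto h_{x\to y}\in\Delta_{\mathscr X}$ mod $\mu^\uparrow$-null sets. $\mathcal H^\star_\mu(\beta,B)$: messages with $h_{x\to y}(\sigma)\propto\bar\psi^B(\sigma)\prod_{v\in\partial x\setminus y}\sum_{\sigma_v}\psi^\beta(\sigma,\sigma_v)h_{v\to x}(\sigma_v)$ $\mu^\uparrow$-a.s. Bethe functional: $\Phi_T(\beta,B,h)=\log\{\sum_\sigma\bar\psi(\sigma)\prod_{j\in\partial o}\sum_{\sigma_j}\psi(\sigma,\sigma_j)h_{j\to o}(\sigma_j)\}-\frac12\sum_{j\in\partial o}\log\{\sum_{\sigma,\sigma_j}\psi(\sigma,\sigma_j)h_{j\to o}(\sigma_j)h_{o\to j}(\sigma)\}$ (empty product $=1$, empty sum $=0$), $\Phi_\mu=\mathbb E_\mu\Phi_T$. *)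

theory Defs
  imports "HOL-Probability.Probability"
begin

text \<open>A (possibly rooted) locally finite graph is represented by an adjacency
relation on nat. Only the connected component of the root matters. Objects on
the quotient space of isomorphism classes are represented by isomorphism-invariant
measurable objects on representatives.\<close>

type_synonym graph = "nat \<Rightarrow> nat \<Rightarrow> bool"

definition nbrs :: "graph \<Rightarrow> nat \<Rightarrow> nat set" where
  "nbrs G v = {u. G v u}"

definition deg :: "graph \<Rightarrow> nat \<Rightarrow> nat" where
  "deg G v = card (nbrs G v)"

definition comp :: "graph \<Rightarrow> nat \<Rightarrow> nat set" where
  "comp G r = {v. (r, v) \<in> {(a, b). G a b}\<^sup>*}"

definition has_cycle_in :: "graph \<Rightarrow> nat set \<Rightarrow> bool" where
  "has_cycle_in G V \<longleftrightarrow> (\<exists>vs. 3 \<le> length vs \<and> distinct vs \<and> set vs \<subseteq> V \<and>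
      (\<forall>i. Suc i < length vs \<longrightarrow> G (vs ! i) (vs ! Suc i)) \<and> G (last vs) (hd vs))"

text \<open>(G,o) represents an element of T_*: the component of o is a locally finite tree.\<close>
definition is_lf_tree :: "graph \<Rightarrow> nat \<Rightarrow> bool" where
  "is_lf_tree G r \<longleftrightarrow>
     (\<forall>u\<in>comp G r. \<forall>v. G u v \<longleftrightarrow> G v u) \<and>
     (\<forall>u\<in>comp G r. \<not> G u u) \<and>
     (\<forall>u\<in>comp G r. finite (nbrs G u)) \<and>
     \<not> has_cycle_in G (comp G r)"

definition driso :: "graph \<Rightarrow> nat \<Rightarrow> nat \<Rightarrow> graph \<Rightarrow> nat \<Rightarrow> nat \<Rightarrow> bool" where
  "driso G a b G' a' b' \<longleftrightarrow> b \<in> comp G a \<and> b' \<in> comp G' a' \<and>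
     (\<exists>f. bij_betw f (comp G a) (comp G' a') \<and>
          (\<forall>u\<in>comp G a. \<forall>v\<in>comp G a. G u v \<longleftrightarrow> G' (f u) (f v)) \<and>
          f a = a' \<and> f b = b')"

definition invariant2 :: "(graph \<Rightarrow> nat \<Rightarrow> nat \<Rightarrow> 'b) \<Rightarrow> bool" where
  "invariant2 F \<longleftrightarrow> (\<forall>G a b G' a' b'. driso G a b G' a' b' \<longrightarrow> F G a b = F G' a' b')"

definition graph_meas :: "graph measure" where
  "graph_meas = Pi\<^sub>M UNIV (\<lambda>_::nat. Pi\<^sub>M UNIV (\<lambda>_::nat. count_space (UNIV::bool set)))"

definition rgraph_space :: "(graph \<times> nat) measure" where
  "rgraph_space = graph_meas \<Otimes>\<^sub>M count_space UNIV"

definition drgraph_space :: "(graph \<times> nat \<times> nat) measure" where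
  "drgraph_space = graph_meas \<Otimes>\<^sub>M (count_space UNIV \<Otimes>\<^sub>M count_space UNIV)"

text \<open>Unimodularity (mass transport principle), for nonnegative Borel functions on
doubly rooted graphs (i.e. isomorphism-invariant measurable functions).\<close>
definition unimodular :: "(graph \<times> nat) measure \<Rightarrow> bool" where
  "unimodular \<mu> \<longleftrightarrow>
     (\<forall>f::graph \<times> nat \<times> nat \<Rightarrow> ennreal. f \<in> borel_measurable drgraph_space \<longrightarrow>
        invariant2 (\<lambda>G a b. f (G, a, b)) \<longrightarrow>
        (\<integral>\<^sup>+ z. (\<integral>\<^sup>+ x. f (fst z, snd z, x) \<partial>count_space (comp (fst z) (snd z))) \<partial>\<mu>) =
        (\<integral>\<^sup>+ z. (\<integral>\<^sup>+ x. f (fst z, x, snd z) \<partial>count_space (comp (fst z) (snd z))) \<partial>\<mu>))"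

definition unimod_prob_on_trees :: "(graph \<times> nat) measure \<Rightarrow> bool" where
  "unimod_prob_on_trees \<mu> \<longleftrightarrow> prob_space \<mu> \<and> sets \<mu> = sets rgraph_space \<and>
     (AE z in \<mu>. is_lf_tree (fst z) (snd z)) \<and> unimodular \<mu>"

text \<open>psi beta s s' = psi^beta(s,s'), psib B s = bar psi^B(s).\<close>
definition H1 :: "(real \<Rightarrow> 'x::finite \<Rightarrow> 'x \<Rightarrow> real) \<Rightarrow> (real \<Rightarrow> 'x \<Rightarrow> real) \<Rightarrow> bool" where
  "H1 psi psib \<longleftrightarrow>
     (\<forall>b s s'. 0 \<le> psi b s s' \<and> psi b s s' = psi b s' s) \<and>
     (\<forall>B s. 0 < psib B s) \<and>
     (\<exists>sp. \<forall>b. 0 < Min (range (\<lambda>s. psi b s sp))) \<and>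
     (\<forall>s. (\<lambda>B. ln (psib B s)) C1_differentiable_on UNIV) \<and>
     (\<forall>s s'. (\<forall>b. psi b s s' = 0) \<or>
             ((\<forall>b. 0 < psi b s s') \<and> (\<lambda>b. ln (psi b s s')) C1_differentiable_on UNIV))"

text \<open>A message: h G x y is the message h_{x->y} on the tree rooted at the directed
edge x->y; it is a probability vector, measurable and isomorphism invariant.\<close>
definition is_message :: "(graph \<Rightarrow> nat \<Rightarrow> nat \<Rightarrow> 'x::finite \<Rightarrow> real) \<Rightarrow> bool" where
  "is_message h \<longleftrightarrow>
     (\<forall>G x y. (\<forall>s. 0 \<le> h G x y s) \<and> (\<Sum>s\<in>UNIV. h G x y s) = 1) \<and>
     (\<forall>s. (\<lambda>z. h (fst z) (fst (snd z)) (snd (snd z)) s) \<in> borel_measurable drgraph_space) \<and>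
     invariant2 h"

definition bp_at :: "(real \<Rightarrow> 'x::finite \<Rightarrow> 'x \<Rightarrow> real) \<Rightarrow> (real \<Rightarrow> 'x \<Rightarrow> real) \<Rightarrow> real \<Rightarrow> real \<Rightarrow>
    (graph \<Rightarrow> nat \<Rightarrow> nat \<Rightarrow> 'x \<Rightarrow> real) \<Rightarrow> graph \<Rightarrow> nat \<Rightarrow> nat \<Rightarrow> bool" where
  "bp_at psi psib b B h G x y \<longleftrightarrow>
     (\<exists>c>0. \<forall>s. h G x y s =
        c * psib B s * (\<Prod>v\<in>nbrs G x - {y}. \<Sum>sv\<in>UNIV. psi b s sv * h G v x sv))"

text \<open>A property holds mu^up-a.s. iff for mu-a.e. (G,o), it holds at (G, j->o) for all
neighbours j of o (J is uniform on the finite set of neighbours).\<close>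
definition AE_up :: "(graph \<times> nat) measure \<Rightarrow> (graph \<Rightarrow> nat \<Rightarrow> nat \<Rightarrow> bool) \<Rightarrow> bool" where
  "AE_up \<mu> P \<longleftrightarrow> (AE z in \<mu>. \<forall>j\<in>nbrs (fst z) (snd z). P (fst z) j (snd z))"

definition Hstar :: "(graph \<times> nat) measure \<Rightarrow> (real \<Rightarrow> 'x::finite \<Rightarrow> 'x \<Rightarrow> real) \<Rightarrow>
    (real \<Rightarrow> 'x \<Rightarrow> real) \<Rightarrow> real \<Rightarrow> real \<Rightarrow> (graph \<Rightarrow> nat \<Rightarrow> nat \<Rightarrow> 'x \<Rightarrow> real) set" where
  "Hstar \<mu> psi psib b B = {h. is_message h \<and> AE_up \<mu> (bp_at psi psib b B h)}"

definition Phi :: "(real \<Rightarrow> 'x::finite \<Rightarrow> 'x \<Rightarrow> real) \<Rightarrow> (real \<Rightarrow> 'x \<Rightarrow> real) \<Rightarrow> real \<Rightarrow> real \<Rightarrow>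
    (graph \<Rightarrow> nat \<Rightarrow> nat \<Rightarrow> 'x \<Rightarrow> real) \<Rightarrow> graph \<Rightarrow> nat \<Rightarrow> real" where
  "Phi psi psib b B h G r =
     ln (\<Sum>s\<in>UNIV. psib B s * (\<Prod>j\<in>nbrs G r. \<Sum>sj\<in>UNIV. psi b s sj * h G j r sj))
     - (1/2) * (\<Sum>j\<in>nbrs G r. ln (\<Sum>s\<in>UNIV. \<Sum>sj\<in>UNIV. psi b s sj * h G j r sj * h G r j s))"

definition Phi_mu :: "(graph \<times> nat) measure \<Rightarrow> (real \<Rightarrow> 'x::finite \<Rightarrow> 'x \<Rightarrow> real) \<Rightarrow>
    (real \<Rightarrow> 'x \<Rightarrow> real) \<Rightarrow> real \<Rightarrow> real \<Rightarrow> (graph \<Rightarrow> nat \<Rightarrow> nat \<Rightarrow> 'x \<Rightarrow> real) \<Rightarrow> real" where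
  "Phi_mu \<mu> psi psib b B h = (\<integral> z. Phi psi psib b B h (fst z) (snd z) \<partial>\<mu>)"

end

theory Submission
  imports Defs
begin


lemma cont_pos_lb:
  fixes f :: "real \<Rightarrow> real"
  assumes "compact S" "continuous_on S f" "\<forall>x\<in>S. 0 < f x"
  shows "\<exists>m>0. \<forall>x\<in>S. m \<le> f x"
proof (cases "S = {}")
  case True then show ?thesis by (auto intro: exI[of _ 1])
next
  case False
  then obtain x0 where "x0 \<in> S" "\<forall>x\<in>S. f x0 \<le> f x"
    using compact_attains_inf[OF compact_continuous_image[OF assms(2,1)]] by auto
  then show ?thesis using assms(3) by blast
qed

lemma cont_ub:
  fixes f :: "real \<Rightarrow> real"
  assumes "compact S" "continuous_on S f"
  shows "\<exists>M. \<forall>x\<in>S. f x \<le> M"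
proof (cases "S = {}")
  case True then show ?thesis by auto
next
  case False
  then obtain x0 where "x0 \<in> S" "\<forall>x\<in>S. f x \<le> f x0"
    using compact_attains_sup[OF compact_continuous_image[OF assms(2,1)]] by auto
  then show ?thesis by blast
qed

lemma finite_choice_lb:
  fixes P :: "'x::finite \<Rightarrow> real \<Rightarrow> bool"
  assumes "\<And>s. \<exists>m>0. P s m" "\<And>s m m'. P s m \<Longrightarrow> 0 < m' \<Longrightarrow> m' \<le> m \<Longrightarrow> P s m'"
  shows "\<exists>m>0. m \<le> 1 \<and> (\<forall>s. P s m)"
proof -
  obtain g where g: "\<And>s. g s > 0 \<and> P s (g s)" using assms(1) by metis
  define m where "m = min 1 (Min (range g))"
  have "m > 0" unfolding m_def using g by (simp add: Min_gr_iff)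
  moreover have "m \<le> g s" for s unfolding m_def by (simp add: min.coboundedI2)
  ultimately show ?thesis using g assms(2) unfolding m_def by (metis min.cobounded1 m_def)
qed

lemma finite_choice_ub:
  fixes P :: "'x::finite \<Rightarrow> real \<Rightarrow> bool"
  assumes "\<And>s. \<exists>M. P s M" "\<And>s M M'. P s M \<Longrightarrow> M \<le> M' \<Longrightarrow> P s M'"
  shows "\<exists>M\<ge>1. (\<forall>s. P s M)"
proof -
  obtain g where g: "\<And>s. P s (g s)" using assms(1) by metis
  define M where "M = max 1 (Max (range g))"
  have "g s \<le> M" for s unfolding M_def by (simp add: max.coboundedI2)
  then show ?thesis using g assms(2) unfolding M_def by (metis max.cobounded1 M_def)
qed

lemma H1_cont_psi:
  assumes "H1 psi psib"
  shows "continuous_on S (\<lambda>b. psi b s s')"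
proof -
  from assms have "(\<forall>b. psi b s s' = 0) \<or> ((\<forall>b. 0 < psi b s s') \<and> (\<lambda>b. ln (psi b s s')) C1_differentiable_on UNIV)"
    unfolding H1_def by blast
  then show ?thesis
  proof
    assume "\<forall>b. psi b s s' = 0" then show ?thesis by (simp add: continuous_on_const)
  next
    assume a: "(\<forall>b. 0 < psi b s s') \<and> (\<lambda>b. ln (psi b s s')) C1_differentiable_on UNIV"
    then have "continuous_on UNIV (\<lambda>b. exp (ln (psi b s s')))"
      by (intro continuous_on_exp C1_differentiable_imp_continuous_on) auto
    then have "continuous_on UNIV (\<lambda>b. psi b s s')" using a by simp
    then show ?thesis by (rule continuous_on_subset) simp
  qed
qed

lemma H1_cont_psib:
  assumes "H1 psi psib"
  shows "continuous_on S (\<lambda>B. psib B s)"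
proof -
  from assms have a: "(\<forall>B. 0 < psib B s) \<and> (\<lambda>B. ln (psib B s)) C1_differentiable_on UNIV"
    unfolding H1_def by blast
  then have "continuous_on UNIV (\<lambda>b. exp (ln (psib b s)))"
      by (intro continuous_on_exp C1_differentiable_imp_continuous_on) auto
  then have "continuous_on UNIV (\<lambda>b. psib b s)" using a by simp
  then show ?thesis by (rule continuous_on_subset) simp
qed

lemma compact_fst_img: "compact K \<Longrightarrow> compact (fst ` (K::(real\<times>real) set))"
  by (intro compact_continuous_image continuous_on_fst continuous_on_id)
lemma compact_snd_img: "compact K \<Longrightarrow> compact (snd ` (K::(real\<times>real) set))"
  by (intro compact_continuous_image continuous_on_snd continuous_on_id)

lemma H1_constants:
  fixes psi :: "real \<Rightarrow> 'x::finite \<Rightarrow> 'x \<Rightarrow> real"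
  assumes H: "H1 psi psib" and K: "compact S1" "compact S2"
  shows "\<exists>sp M m pblo pbhi. 1 \<le> M \<and> 0 < m \<and> m \<le> 1 \<and> 0 < pblo \<and> pblo \<le> 1 \<and> 1 \<le> pbhi \<and>
     (\<forall>b\<in>S1. \<forall>s s'. 0 \<le> psi b s s' \<and> psi b s s' \<le> M) \<and>
     (\<forall>b\<in>S1. \<forall>s. m \<le> psi b s sp \<and> m \<le> psi b sp s) \<and>
     (\<forall>B\<in>S2. \<forall>s. pblo \<le> psib B s \<and> psib B s \<le> pbhi)"
proof -
  have nn: "\<forall>b s s'. 0 \<le> psi b s s' \<and> psi b s s' = psi b s' s" using H unfolding H1_def by blast
  obtain sp where sp: "\<forall>b. 0 < Min (range (\<lambda>s. psi b s sp))" using H unfolding H1_def by blast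
  have sppos: "0 < psi b s sp" for b s using sp by (simp add: Min_gr_iff)
  have "\<exists>M\<ge>1. \<forall>p::'x\<times>'x. \<forall>b\<in>S1. psi b (fst p) (snd p) \<le> M"
    by (rule finite_choice_ub) (auto intro: cont_ub[OF K(1) H1_cont_psi[OF H]] order_trans)
  then obtain M where M: "M \<ge> 1" "\<And>b s s'. b \<in> S1 \<Longrightarrow> psi b s s' \<le> M" by fastforce
  have "\<exists>m>0. m \<le> 1 \<and> (\<forall>s. \<forall>b\<in>S1. m \<le> psi b s sp)"
    by (rule finite_choice_lb) (auto intro: cont_pos_lb[OF K(1) H1_cont_psi[OF H]] order_trans sppos)
  then obtain m where m: "m > 0" "m \<le> 1" "\<And>b s. b \<in> S1 \<Longrightarrow> m \<le> psi b s sp" by blast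
  have hb: "\<forall>B s. 0 < psib B s" using H unfolding H1_def by blast
  have "\<exists>m>0. m \<le> 1 \<and> (\<forall>s. \<forall>B\<in>S2. m \<le> psib B s)"
  proof (rule finite_choice_lb)
    fix s show "\<exists>m>0. \<forall>B\<in>S2. m \<le> psib B s"
      using cont_pos_lb[OF K(2) H1_cont_psib[OF H, of S2 s]] hb by auto
  qed (auto intro: order_trans)
  then obtain pblo where pblo: "pblo > 0" "pblo \<le> 1" "\<And>B s. B \<in> S2 \<Longrightarrow> pblo \<le> psib B s" by blast
  have "\<exists>M\<ge>1. \<forall>s. \<forall>B\<in>S2. psib B s \<le> M"
    by (rule finite_choice_ub) (auto intro: cont_ub[OF K(2) H1_cont_psib[OF H]] order_trans)
  then obtain pbhi where pbhi: "pbhi \<ge> 1" "\<And>B s. B \<in> S2 \<Longrightarrow> psib B s \<le> pbhi" by blast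
  show ?thesis
    apply (rule exI[of _ sp], rule exI[of _ M], rule exI[of _ m], rule exI[of _ pblo], rule exI[of _ pbhi])
    using M m pblo pbhi nn by metis
qed

lemma H1_constants_pos:
  fixes psi :: "real \<Rightarrow> 'x::finite \<Rightarrow> 'x \<Rightarrow> real"
  assumes H: "H1 psi psib" and K: "compact S1" and pos: "\<forall>b s s'. 0 < psi b s s'"
  shows "\<exists>mm>0. mm \<le> 1 \<and> (\<forall>b\<in>S1. \<forall>s s'. mm \<le> psi b s s')"
proof -
  have "\<exists>m>0. m \<le> 1 \<and> (\<forall>p::'x\<times>'x. \<forall>b\<in>S1. m \<le> psi b (fst p) (snd p))"
  proof (rule finite_choice_lb)
    fix p :: "'x\<times>'x" show "\<exists>m>0. \<forall>b\<in>S1. m \<le> psi b (fst p) (snd p)"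
      using cont_pos_lb[OF K(1) H1_cont_psi[OF H, of S1 "fst p" "snd p"]] pos by auto
  qed (auto intro: order_trans)
  then show ?thesis by fastforce
qed



definition LL :: "'x::finite itself \<Rightarrow> real \<Rightarrow> real \<Rightarrow> real \<Rightarrow> real \<Rightarrow> real" where
  "LL t M m pblo pbhi = ln (real CARD('x) * pbhi) - ln pblo + ln M - ln m"

lemma LL_parts:
  fixes t :: "'x::finite itself"
  assumes "1 \<le> M" "0 < m" "m \<le> 1" "0 < pblo" "pblo \<le> 1" "1 \<le> pbhi"
  shows "0 \<le> ln (real CARD('x::finite) * pbhi)" "0 \<le> - ln pblo" "0 \<le> ln M" "0 \<le> - ln m"
    "0 \<le> LL t M m pblo pbhi"
proof -
  have c: "1 \<le> real CARD('x)" by (simp add: Suc_le_eq)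
  have "1 \<le> real CARD('x) * pbhi" using mult_mono[OF c assms(6)] by simp
  then show a: "0 \<le> ln (real CARD('x::finite) * pbhi)" by simp
  show b: "0 \<le> - ln pblo" using assms by simp
  show d: "0 \<le> ln M" using assms by simp
  show e: "0 \<le> - ln m" using assms by simp
  show "0 \<le> LL t M m pblo pbhi" unfolding LL_def using a b d e by linarith
qed

lemma Z_bound:
  fixes a :: "nat \<Rightarrow> 'x::finite \<Rightarrow> real" and pb :: "'x \<Rightarrow> real"
  assumes N: "finite N" "card N \<le> D"
    and a: "\<forall>v\<in>N. \<forall>s. 0 \<le> a v s \<and> a v s \<le> M" "\<forall>v\<in>N. m \<le> a v sp"
    and c: "1 \<le> M" "0 < m" "m \<le> 1" "0 < pblo" "pblo \<le> 1" "1 \<le> pbhi"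
    and pb: "\<forall>s. pblo \<le> pb s \<and> pb s \<le> pbhi"
  shows "\<bar>ln (\<Sum>s\<in>UNIV. pb s * (\<Prod>v\<in>N. a v s))\<bar> \<le> LL TYPE('x) M m pblo pbhi * (real D + 1)"
    and "0 < (\<Sum>s\<in>UNIV. pb s * (\<Prod>v\<in>N. a v s))"
proof -
  define Z where "Z = (\<Sum>s\<in>UNIV. pb s * (\<Prod>v\<in>N. a v s))"
  have nn: "0 \<le> pb s * (\<Prod>v\<in>N. a v s)" for s
    using pb c a by (intro mult_nonneg_nonneg prod_nonneg) (auto intro: order_trans[of 0 pblo])
  have "(\<Prod>v\<in>N. m) \<le> (\<Prod>v\<in>N. a v sp)" using a c by (intro prod_mono) auto
  then have p1: "m ^ D \<le> (\<Prod>v\<in>N. a v sp)"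
    using power_decreasing[OF N(2), of m] c by simp
  have "pblo * m ^ D \<le> pb sp * (\<Prod>v\<in>N. a v sp)"
    using p1 pb c by (intro mult_mono) (auto intro: order_trans[OF less_imp_le[OF c(4)]])
  also have "\<dots> \<le> Z" unfolding Z_def by (rule member_le_sum) (use nn in auto)
  finally have Zlo: "pblo * m ^ D \<le> Z" .
  have pos: "0 < pblo * m ^ D" using c by simp
  have Zpos: "0 < Z" using pos Zlo by linarith
  then show "0 < (\<Sum>s\<in>UNIV. pb s * (\<Prod>v\<in>N. a v s))" unfolding Z_def .
  have "pb s * (\<Prod>v\<in>N. a v s) \<le> pbhi * M ^ D" for s
  proof -
    have "(\<Prod>v\<in>N. a v s) \<le> (\<Prod>v\<in>N. M)" using a by (intro prod_mono) auto
    also have "\<dots> \<le> M ^ D" using power_increasing[OF N(2), of M] c by simp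
    finally have "(\<Prod>v\<in>N. a v s) \<le> M ^ D" .
    then show ?thesis using pb a c by (intro mult_mono) (auto intro: prod_nonneg)
  qed
  then have "Z \<le> (\<Sum>s\<in>(UNIV::'x set). pbhi * M ^ D)" unfolding Z_def by (intro sum_mono) auto
  then have Zhi: "Z \<le> real CARD('x) * pbhi * M ^ D" by simp
  have "ln Z \<le> ln (real CARD('x) * pbhi * M ^ D)" using Zhi Zpos by simp
  also have "\<dots> = ln (real CARD('x) * pbhi) + real D * ln M"
    using c by (simp add: ln_mult ln_realpow)
  finally have u: "ln Z \<le> ln (real CARD('x) * pbhi) + real D * ln M" .
  have "ln (pblo * m ^ D) \<le> ln Z" using Zlo pos by simp
  moreover have "ln (pblo * m ^ D) = ln pblo + real D * ln m" using c by (simp add: ln_mult ln_realpow)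
  ultimately have l: "ln pblo + real D * ln m \<le> ln Z" by simp
  have P: "0 \<le> ln (real CARD('x) * pbhi)" "0 \<le> - ln pblo" "0 \<le> ln M" "0 \<le> - ln m"
    using LL_parts[OF c] by auto
  have f1: "real D * ln M \<le> real D * LL TYPE('x) M m pblo pbhi"
    by (rule mult_left_mono) (use P in \<open>auto simp: LL_def\<close>)
  have f2: "real D * (- ln m) \<le> real D * LL TYPE('x) M m pblo pbhi"
    by (rule mult_left_mono) (use P in \<open>auto simp: LL_def\<close>)
  have f3: "ln (real CARD('x) * pbhi) \<le> LL TYPE('x) M m pblo pbhi" "- ln pblo \<le> LL TYPE('x) M m pblo pbhi"
    using P by (auto simp: LL_def)
  have e: "LL TYPE('x) M m pblo pbhi * (real D + 1) = real D * LL TYPE('x) M m pblo pbhi + LL TYPE('x) M m pblo pbhi"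
    by (simp add: algebra_simps)
  have "\<bar>ln Z\<bar> \<le> LL TYPE('x) M m pblo pbhi * (real D + 1)"
    unfolding e abs_le_iff using u l f1 f2 f3 by (simp only: minus_mult_right[symmetric]) linarith
  then show "\<bar>ln (\<Sum>s\<in>UNIV. pb s * (\<Prod>v\<in>N. a v s))\<bar> \<le> LL TYPE('x) M m pblo pbhi * (real D + 1)"
    unfolding Z_def .
qed



lemma a_props:
  fixes psi :: "real \<Rightarrow> 'x::finite \<Rightarrow> 'x \<Rightarrow> real"
  assumes msg: "\<forall>s. 0 \<le> hh s" "(\<Sum>s\<in>UNIV. hh s) = 1"
    and psiM: "\<forall>s s'. 0 \<le> psi b s s' \<and> psi b s s' \<le> M"
    and psim: "\<forall>s. m \<le> psi b sp s"
  shows "0 \<le> (\<Sum>sj\<in>UNIV. psi b s sj * hh sj)" "(\<Sum>sj\<in>UNIV. psi b s sj * hh sj) \<le> M"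
    "m \<le> (\<Sum>sj\<in>UNIV. psi b sp sj * hh sj)"
proof -
  show "0 \<le> (\<Sum>sj\<in>UNIV. psi b s sj * hh sj)" using msg psiM by (intro sum_nonneg) auto
  have "(\<Sum>sj\<in>UNIV. psi b s sj * hh sj) \<le> (\<Sum>sj\<in>UNIV. M * hh sj)"
    using msg psiM by (intro sum_mono mult_right_mono) auto
  also have "\<dots> = M" using msg by (simp add: sum_distrib_left[symmetric])
  finally show "(\<Sum>sj\<in>UNIV. psi b s sj * hh sj) \<le> M" .
  have "(\<Sum>sj\<in>UNIV. m * hh sj) \<le> (\<Sum>sj\<in>UNIV. psi b sp sj * hh sj)"
    using msg psim by (intro sum_mono mult_right_mono) auto
  moreover have "(\<Sum>sj\<in>UNIV. m * hh sj) = m" using msg by (simp add: sum_distrib_left[symmetric])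
  ultimately show "m \<le> (\<Sum>sj\<in>UNIV. psi b sp sj * hh sj)" by simp
qed

lemma Phi_bound_a:
  fixes psi :: "real \<Rightarrow> 'x::finite \<Rightarrow> 'x \<Rightarrow> real"
  assumes msg: "\<forall>G x y. (\<forall>s. 0 \<le> h G x y s) \<and> (\<Sum>s\<in>UNIV. h G x y s) = 1"
    and fin: "finite (nbrs G r)"
    and bp: "\<forall>j\<in>nbrs G r. bp_at psi psib b B h G r j"
    and psiM: "\<forall>s s'. 0 \<le> psi b s s' \<and> psi b s s' \<le> M"
    and psim: "\<forall>s. m \<le> psi b sp s"
    and c: "1 \<le> M" "0 < m" "m \<le> 1" "0 < pblo" "pblo \<le> 1" "1 \<le> pbhi"
    and pb: "\<forall>s. pblo \<le> psib B s \<and> psib B s \<le> pbhi"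
  shows "\<bar>Phi psi psib b B h G r\<bar> \<le> 2 * LL TYPE('x) M m pblo pbhi * (real (deg G r)^2 + 1)"
proof -
  define N where "N = nbrs G r"
  define D where "D = deg G r"
  have D: "card N = D" unfolding N_def D_def deg_def ..
  define L where "L = LL TYPE('x) M m pblo pbhi"
  have L0: "0 \<le> L" unfolding L_def by (rule LL_parts(5)[OF c])
  define a where "a j s = (\<Sum>sj\<in>UNIV. psi b s sj * h G j r sj)" for j s
  have ap: "\<forall>v\<in>A. \<forall>s. 0 \<le> a v s \<and> a v s \<le> M" "\<forall>v\<in>A. m \<le> a v sp" for A
    unfolding a_def using a_props[where psi=psi and b=b and M=M and m=m and sp=sp, OF _ _ psiM psim] msg by auto
  define Z where "Z = (\<Sum>s\<in>UNIV. psib B s * (\<Prod>v\<in>N. a v s))"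
  have finN: "finite N" using fin N_def by simp
  have Zb: "\<bar>ln Z\<bar> \<le> L * (real D + 1)" "0 < Z"
    unfolding Z_def L_def using Z_bound[OF finN _ ap c pb, of D] D by auto
  define E where "E j = (\<Sum>s\<in>UNIV. \<Sum>sj\<in>UNIV. psi b s sj * h G j r sj * h G r j s)" for j
  have Eb: "\<bar>ln (E j)\<bar> \<le> 2 * L * (real D + 1)" if j: "j \<in> N" for j
  proof -
    obtain cc where cc: "cc > 0" "\<forall>s. h G r j s = cc * psib B s * (\<Prod>v\<in>N - {j}. a v s)"
      using bp j unfolding bp_at_def N_def a_def by blast
    define W where "W = (\<Sum>s\<in>UNIV. psib B s * (\<Prod>v\<in>N - {j}. a v s))"
    have cardj: "card (N - {j}) \<le> D" using D finN card_Diff1_le[of N j] by simp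
    have Wb: "\<bar>ln W\<bar> \<le> L * (real D + 1)" "0 < W"
      unfolding W_def L_def using Z_bound[OF _ cardj ap c pb] finN by auto
    have "1 = (\<Sum>s\<in>UNIV. h G r j s)" using msg by simp
    also have "\<dots> = cc * W" unfolding W_def using cc by (simp add: sum_distrib_left mult.assoc)
    finally have cW: "cc * W = 1" by simp
    have "E j = (\<Sum>s\<in>UNIV. a j s * h G r j s)"
      unfolding E_def a_def by (simp add: sum_distrib_right)
    also have "\<dots> = (\<Sum>s\<in>UNIV. cc * (psib B s * (a j s * (\<Prod>v\<in>N - {j}. a v s))))"
      using cc by (simp add: algebra_simps)
    also have "\<dots> = cc * Z"
      unfolding Z_def using prod.remove[OF finN j, of "\<lambda>v. a v _"]
      by (simp add: sum_distrib_left)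
    finally have "E j = cc * Z" .
    then have "ln (E j) = ln cc + ln Z" using cc Zb by (simp add: ln_mult)
    moreover have "ln cc + ln W = 0" using ln_mult[of cc W] cW cc Wb by simp
    ultimately have "ln (E j) = ln Z - ln W" by linarith
    then show ?thesis using Zb Wb by (simp add: abs_le_iff)
  qed
  have "\<bar>\<Sum>j\<in>N. ln (E j)\<bar> \<le> (\<Sum>j\<in>N. \<bar>ln (E j)\<bar>)" by (rule sum_abs)
  also have "\<dots> \<le> (\<Sum>j\<in>N. 2 * L * (real D + 1))" using Eb by (intro sum_mono) auto
  also have "\<dots> = real D * (2 * L * (real D + 1))" using D by simp
  finally have S: "\<bar>\<Sum>j\<in>N. ln (E j)\<bar> \<le> real D * (2 * L * (real D + 1))" .
  have Phi_eq: "Phi psi psib b B h G r = ln Z - 1/2 * (\<Sum>j\<in>N. ln (E j))"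
    unfolding Phi_def Z_def E_def a_def N_def ..
  have "\<bar>Phi psi psib b B h G r\<bar> \<le> \<bar>ln Z\<bar> + 1/2 * \<bar>\<Sum>j\<in>N. ln (E j)\<bar>"
    unfolding Phi_eq by (simp add: abs_triangle_ineq4 order_trans[OF abs_triangle_ineq4])
  also have "\<dots> \<le> L * (real D + 1) + 1/2 * (real D * (2 * L * (real D + 1)))"
    using Zb S by simp
  also have "\<dots> = L * (real D + 1)^2" by (simp add: algebra_simps power2_eq_square)
  also have "\<dots> \<le> L * (2 * (real D ^2 + 1))"
  proof (rule mult_left_mono[OF _ L0])
    have "0 \<le> (real D - 1)^2" by simp
    then show "(real D + 1)^2 \<le> 2 * (real D ^2 + 1)" by (simp add: power2_eq_square algebra_simps)
  qed
  finally show ?thesis unfolding L_def D_def by (simp add: algebra_simps)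
qed

lemma Phi_bound_b:
  fixes psi :: "real \<Rightarrow> 'x::finite \<Rightarrow> 'x \<Rightarrow> real"
  assumes msg: "\<forall>G x y. (\<forall>s. 0 \<le> h G x y s) \<and> (\<Sum>s\<in>UNIV. h G x y s) = 1"
    and fin: "finite (nbrs G r)"
    and psiM: "\<forall>s s'. 0 \<le> psi b s s' \<and> psi b s s' \<le> M"
    and psim: "\<forall>s. m \<le> psi b sp s"
    and psimm: "\<forall>s s'. mm \<le> psi b s s'" and mm: "0 < mm" "mm \<le> 1"
    and c: "1 \<le> M" "0 < m" "m \<le> 1" "0 < pblo" "pblo \<le> 1" "1 \<le> pbhi"
    and pb: "\<forall>s. pblo \<le> psib B s \<and> psib B s \<le> pbhi"
  shows "\<bar>Phi psi psib b B h G r\<bar> \<le> (LL TYPE('x) M m pblo pbhi + (ln M - ln mm)) * (real (deg G r) + 1)"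
proof -
  define N where "N = nbrs G r"
  define D where "D = deg G r"
  have D: "card N = D" unfolding N_def D_def deg_def ..
  define L where "L = LL TYPE('x) M m pblo pbhi"
  have L0: "0 \<le> L" unfolding L_def by (rule LL_parts(5)[OF c])
  define L2 where "L2 = ln M - ln mm"
  have L20: "0 \<le> L2" unfolding L2_def using c mm by simp
  define a where "a j s = (\<Sum>sj\<in>UNIV. psi b s sj * h G j r sj)" for j s
  have ap: "\<forall>v\<in>A. \<forall>s. 0 \<le> a v s \<and> a v s \<le> M" "\<forall>v\<in>A. m \<le> a v sp" for A
    unfolding a_def using a_props[where psi=psi and b=b and M=M and m=m and sp=sp, OF _ _ psiM psim] msg by auto
  have amm: "mm \<le> a v s" for v s
    unfolding a_def using a_props(3)[where psi=psi and b=b and M=M and m=mm and sp=s, OF _ _ psiM] msg psimm by auto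
  define Z where "Z = (\<Sum>s\<in>UNIV. psib B s * (\<Prod>v\<in>N. a v s))"
  have finN: "finite N" using fin N_def by simp
  have Zb: "\<bar>ln Z\<bar> \<le> L * (real D + 1)" "0 < Z"
    unfolding Z_def L_def using Z_bound[OF finN _ ap c pb, of D] D by auto
  define E where "E j = (\<Sum>s\<in>UNIV. \<Sum>sj\<in>UNIV. psi b s sj * h G j r sj * h G r j s)" for j
  have Eb: "\<bar>ln (E j)\<bar> \<le> L2" for j
  proof -
    have Ea: "E j = (\<Sum>s\<in>UNIV. a j s * h G r j s)"
      unfolding E_def a_def by (simp add: sum_distrib_right)
    have "E j \<le> (\<Sum>s\<in>UNIV. M * h G r j s)" unfolding Ea
      using ap msg by (intro sum_mono mult_right_mono) auto
    also have "\<dots> = M" using msg by (simp add: sum_distrib_left[symmetric])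
    finally have Eu: "E j \<le> M" .
    have "(\<Sum>s\<in>UNIV. mm * h G r j s) \<le> E j" unfolding Ea
      using amm msg by (intro sum_mono mult_right_mono) auto
    moreover have "(\<Sum>s\<in>UNIV. mm * h G r j s) = mm" using msg by (simp add: sum_distrib_left[symmetric])
    ultimately have El: "mm \<le> E j" by simp
    have "ln (E j) \<le> ln M" using Eu El mm by simp
    moreover have "ln mm \<le> ln (E j)" using El mm by simp
    moreover have "ln mm \<le> 0" "0 \<le> ln M" using mm c by auto
    ultimately show ?thesis unfolding L2_def abs_le_iff by linarith
  qed
  have "\<bar>\<Sum>j\<in>N. ln (E j)\<bar> \<le> (\<Sum>j\<in>N. \<bar>ln (E j)\<bar>)" by (rule sum_abs)
  also have "\<dots> \<le> (\<Sum>j\<in>N. L2)" using Eb by (intro sum_mono) auto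
  also have "\<dots> = real D * L2" using D by simp
  finally have S: "\<bar>\<Sum>j\<in>N. ln (E j)\<bar> \<le> real D * L2" .
  have Phi_eq: "Phi psi psib b B h G r = ln Z - 1/2 * (\<Sum>j\<in>N. ln (E j))"
    unfolding Phi_def Z_def E_def a_def N_def ..
  have "\<bar>Phi psi psib b B h G r\<bar> \<le> \<bar>ln Z\<bar> + 1/2 * \<bar>\<Sum>j\<in>N. ln (E j)\<bar>"
    unfolding Phi_eq by (simp add: abs_triangle_ineq4 order_trans[OF abs_triangle_ineq4])
  also have "\<dots> \<le> L * (real D + 1) + 1/2 * (real D * L2)"
    using Zb S by simp
  also have "\<dots> \<le> (L + L2) * (real D + 1)"
    using L20 L0 by (simp add: algebra_simps)
  finally show ?thesis unfolding L_def L2_def D_def .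
qed



lemma meas_edge[measurable]: "Measurable.pred graph_meas (\<lambda>G::graph. G (x::nat) (y::nat))"
proof -
  have 1: "(\<lambda>G::graph. G x) \<in> measurable graph_meas (Pi\<^sub>M UNIV (\<lambda>_::nat. count_space (UNIV::bool set)))"
    unfolding graph_meas_def using measurable_component_singleton[of x UNIV "\<lambda>_::nat. Pi\<^sub>M UNIV (\<lambda>_::nat. count_space (UNIV::bool set))"] by simp
  have 2: "(\<lambda>g::nat\<Rightarrow>bool. g y) \<in> measurable (Pi\<^sub>M UNIV (\<lambda>_::nat. count_space (UNIV::bool set))) (count_space UNIV)"
    using measurable_component_singleton[of y UNIV "\<lambda>_::nat. count_space (UNIV::bool set)"] by simp
  show ?thesis using measurable_compose[OF 1 2] by simp
qed

lemma meas_h: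
  assumes "is_message h"
  shows "(\<lambda>G. h G x y s) \<in> borel_measurable graph_meas"
proof -
  have m: "(\<lambda>z. h (fst z) (fst (snd z)) (snd (snd z)) s) \<in> borel_measurable drgraph_space"
    using assms unfolding is_message_def by blast
  have "(\<lambda>G. (G, x, y)) \<in> measurable graph_meas drgraph_space"
    unfolding drgraph_space_def by measurable
  from measurable_compose[OF this m] show ?thesis by simp
qed

lemma pred_finite_set:
  fixes S :: "'a \<Rightarrow> nat set"
  assumes "\<And>v. Measurable.pred M (\<lambda>x. v \<in> S x)"
  shows "Measurable.pred M (\<lambda>x. finite (S x))"
proof -
  note [measurable] = assms
  have "Measurable.pred M (\<lambda>x. \<exists>n. \<forall>v. v \<in> S x \<longrightarrow> v < n)"
    by measurable
  moreover have "finite (S x) \<longleftrightarrow> (\<exists>n. \<forall>v. v \<in> S x \<longrightarrow> v < n)" for x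
    by (auto simp: finite_nat_set_iff_bounded)
  ultimately show ?thesis by simp
qed

lemma meas_setsum:
  fixes S :: "'a \<Rightarrow> nat set" and g :: "nat \<Rightarrow> 'a \<Rightarrow> real"
  assumes S: "\<And>v. Measurable.pred M (\<lambda>x. v \<in> S x)" and g: "\<And>v. g v \<in> borel_measurable M"
  shows "(\<lambda>x. \<Sum>v\<in>S x. g v x) \<in> borel_measurable M"
proof -
  note [measurable] = S g pred_finite_set[where M=M and S=S, OF S]
  define u where "u n x = (if finite (S x) then (\<Sum>v<n. if v \<in> S x then g v x else 0) else 0)" for n x
  have um: "u n \<in> borel_measurable M" for n unfolding u_def by measurable
  have conv: "(\<lambda>n. u n x) \<longlonglongrightarrow> (\<Sum>v\<in>S x. g v x)" for x
  proof (cases "finite (S x)")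
    case True
    then obtain n0 where n0: "S x \<subseteq> {..<n0}" by (auto simp: finite_nat_set_iff_bounded)
    have "u n x = (\<Sum>v\<in>S x. g v x)" if "n \<ge> n0" for n
    proof -
      have "{..<n} \<inter> S x = S x" using n0 that by auto
      then show ?thesis unfolding u_def using True sum.inter_restrict[of "{..<n}" "\<lambda>v. g v x" "S x"] by simp
    qed
    then show ?thesis by (intro tendsto_eventually) (auto simp: eventually_sequentially)
  next
    case False then show ?thesis unfolding u_def by simp
  qed
  show ?thesis by (rule borel_measurable_LIMSEQ_real[OF conv um])
qed

lemma meas_setprod:
  fixes S :: "'a \<Rightarrow> nat set" and g :: "nat \<Rightarrow> 'a \<Rightarrow> real"
  assumes S: "\<And>v. Measurable.pred M (\<lambda>x. v \<in> S x)" and g: "\<And>v. g v \<in> borel_measurable M"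
  shows "(\<lambda>x. \<Prod>v\<in>S x. g v x) \<in> borel_measurable M"
proof -
  note [measurable] = S g pred_finite_set[where M=M and S=S, OF S]
  define u where "u n x = (if finite (S x) then (\<Prod>v<n. if v \<in> S x then g v x else 1) else 1)" for n x
  have um: "u n \<in> borel_measurable M" for n unfolding u_def by measurable
  have conv: "(\<lambda>n. u n x) \<longlonglongrightarrow> (\<Prod>v\<in>S x. g v x)" for x
  proof (cases "finite (S x)")
    case True
    then obtain n0 where n0: "S x \<subseteq> {..<n0}" by (auto simp: finite_nat_set_iff_bounded)
    have "u n x = (\<Prod>v\<in>S x. g v x)" if "n \<ge> n0" for n
    proof -
      have "{..<n} \<inter> S x = S x" using n0 that by auto
      then show ?thesis unfolding u_def using True prod.inter_restrict[of "{..<n}" "\<lambda>v. g v x" "S x"] by simp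
    qed
    then show ?thesis by (intro tendsto_eventually) (auto simp: eventually_sequentially)
  next
    case False then show ?thesis unfolding u_def by simp
  qed
  show ?thesis by (rule borel_measurable_LIMSEQ_real[OF conv um])
qed

lemma meas_Phi_G:
  assumes "is_message h"
  shows "(\<lambda>G. Phi psi psib b B h G r) \<in> borel_measurable graph_meas"
proof -
  note [measurable] = meas_h[OF assms]
  have S: "Measurable.pred graph_meas (\<lambda>G. v \<in> nbrs G r)" for v unfolding nbrs_def by simp
  have [measurable]: "(\<lambda>G. \<Prod>j\<in>nbrs G r. \<Sum>sj\<in>UNIV. psi b s sj * h G j r sj) \<in> borel_measurable graph_meas" for s
    by (rule meas_setprod[OF S]) measurable
  have [measurable]: "(\<lambda>G. \<Sum>j\<in>nbrs G r. ln (\<Sum>s\<in>UNIV. \<Sum>sj\<in>UNIV. psi b s sj * h G j r sj * h G r j s)) \<in> borel_measurable graph_meas"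
    by (rule meas_setsum[OF S]) measurable
  show ?thesis unfolding Phi_def by measurable
qed

lemma meas_Phi:
  assumes "is_message h"
  shows "(\<lambda>z. Phi psi psib b B h (fst z) (snd z)) \<in> borel_measurable rgraph_space"
proof -
  have "(\<lambda>z. Phi psi psib b B h (fst z) r) \<in> borel_measurable rgraph_space" for r
    unfolding rgraph_space_def by (rule measurable_compose[OF measurable_fst meas_Phi_G[OF assms]])
  moreover have "snd \<in> measurable rgraph_space (count_space UNIV)"
    unfolding rgraph_space_def by simp
  ultimately show ?thesis by (rule measurable_compose_countable)
qed



lemma comp_refl: "r \<in> comp G r" unfolding comp_def by simp
lemma comp_step: "u \<in> comp G r \<Longrightarrow> G u v \<Longrightarrow> v \<in> comp G r"
  unfolding comp_def by (auto intro: rtrancl_into_rtrancl)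
lemma comp_trans: "u \<in> comp G r \<Longrightarrow> v \<in> comp G u \<Longrightarrow> v \<in> comp G r"
  unfolding comp_def by (auto intro: rtrancl_trans)
lemma comp_eq: "u \<in> comp G r \<Longrightarrow> r \<in> comp G u \<Longrightarrow> comp G u = comp G r"
  using comp_trans by blast
lemma comp_edge: "G r v \<Longrightarrow> v \<in> comp G r"
  using comp_step[OF comp_refl] .

definition Qf where
  "Qf psi psib b B h G x y \<longleftrightarrow> G x y \<and> G y x \<and> (\<forall>v. G y v \<longrightarrow> G v y) \<and> \<not> bp_at psi psib b B h G y x"

lemma bp_at_iff:
  assumes "(\<Sum>s\<in>UNIV. h G x y s) = 1"
  shows "bp_at psi psib b B h G x y \<longleftrightarrow>
    (0 < (\<Sum>s\<in>UNIV. psib B s * (\<Prod>v\<in>nbrs G x - {y}. \<Sum>sv\<in>UNIV. psi b s sv * h G v x sv)) \<and>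
     (\<forall>s. h G x y s = psib B s * (\<Prod>v\<in>nbrs G x - {y}. \<Sum>sv\<in>UNIV. psi b s sv * h G v x sv) /
         (\<Sum>s\<in>UNIV. psib B s * (\<Prod>v\<in>nbrs G x - {y}. \<Sum>sv\<in>UNIV. psi b s sv * h G v x sv))))"
  (is "?L \<longleftrightarrow> (0 < sum ?w UNIV \<and> (\<forall>s. h G x y s = ?w s / sum ?w UNIV))")
proof
  assume ?L
  then obtain c where c: "c > 0" "\<forall>s. h G x y s = c * ?w s" unfolding bp_at_def by (auto simp: mult.assoc)
  have "1 = c * sum ?w UNIV" using assms c by (simp add: sum_distrib_left)
  then have W: "sum ?w UNIV = 1 / c" using c by (simp add: field_simps)
  then show "0 < sum ?w UNIV \<and> (\<forall>s. h G x y s = ?w s / sum ?w UNIV)" using c by simp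
next
  assume a: "0 < sum ?w UNIV \<and> (\<forall>s. h G x y s = ?w s / sum ?w UNIV)"
  show ?L unfolding bp_at_def
    by (rule exI[of _ "1 / sum ?w UNIV"]) (use a in \<open>auto simp: field_simps\<close>)
qed

lemma pred_Qf_G:
  assumes "is_message h"
  shows "Measurable.pred graph_meas (\<lambda>G. Qf psi psib b B h G x y)"
proof -
  note [measurable] = meas_h[OF assms]
  have S: "Measurable.pred graph_meas (\<lambda>G. v \<in> nbrs G y - {x})" for v unfolding nbrs_def by simp
  have [measurable]: "(\<lambda>G. \<Prod>v\<in>nbrs G y - {x}. \<Sum>sv\<in>UNIV. psi b s sv * h G v y sv) \<in> borel_measurable graph_meas" for s
    by (rule meas_setprod[OF S]) measurable
  have sum1: "(\<Sum>s\<in>UNIV. h G y x s) = 1" for G using assms unfolding is_message_def by blast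
  define w where "w s G = psib B s * (\<Prod>v\<in>nbrs G y - {x}. \<Sum>sv\<in>UNIV. psi b s sv * h G v y sv)" for s G
  have wm[measurable]: "w s \<in> borel_measurable graph_meas" for s unfolding w_def by measurable
  have Wm[measurable]: "(\<lambda>G. \<Sum>s\<in>UNIV. w s G) \<in> borel_measurable graph_meas"
    by (rule borel_measurable_sum) (rule wm)
  have p1: "Measurable.pred graph_meas (\<lambda>G. 0 < (\<Sum>s\<in>UNIV. w s G))" by measurable
  have p2: "Measurable.pred graph_meas (\<lambda>G. h G y x s = w s G / (\<Sum>s\<in>UNIV. w s G))" for s
  proof -
    have hm: "(\<lambda>G. h G y x s) \<in> borel_measurable graph_meas" by (rule meas_h[OF assms])
    have rm: "(\<lambda>G. w s G / (\<Sum>s\<in>UNIV. w s G)) \<in> borel_measurable graph_meas"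
      by (intro borel_measurable_divide wm Wm)
    show ?thesis unfolding pred_def by (rule borel_measurable_eq[OF hm rm])
  qed
  have p3: "Measurable.pred graph_meas (\<lambda>G. \<forall>s\<in>UNIV. h G y x s = w s G / (\<Sum>s\<in>UNIV. w s G))"
    by (rule pred_intros_finite(3)) (auto intro: p2)
  have p4: "Measurable.pred graph_meas (\<lambda>G. G x y \<and> G y x \<and> (\<forall>v. G y v \<longrightarrow> G v y))" by measurable
  have p3': "Measurable.pred graph_meas (\<lambda>G. \<forall>s. h G y x s = w s G / (\<Sum>s\<in>UNIV. w s G))"
    using p3 by (simp only: ball_UNIV)
  have p5: "Measurable.pred graph_meas (\<lambda>G. (G x y \<and> G y x \<and> (\<forall>v. G y v \<longrightarrow> G v y)) \<and>
          \<not> (0 < (\<Sum>s\<in>UNIV. w s G) \<and> (\<forall>s. h G y x s = w s G / (\<Sum>s\<in>UNIV. w s G))))"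
    by (rule pred_intros_logic(3)[OF p4 pred_intros_logic(2)[OF pred_intros_logic(3)[OF p1 p3']]])
  have "(\<lambda>G. Qf psi psib b B h G x y) = (\<lambda>G. (G x y \<and> G y x \<and> (\<forall>v. G y v \<longrightarrow> G v y)) \<and>
          \<not> (0 < (\<Sum>s\<in>UNIV. w s G) \<and> (\<forall>s. h G y x s = w s G / (\<Sum>s\<in>UNIV. w s G))))"
    unfolding Qf_def bp_at_iff[where h=h and x=y and y=x, OF sum1] w_def by (simp only: conj_assoc)
  then show ?thesis using p5 by (simp only:)
qed

lemma meas_F:
  assumes "is_message h"
  shows "(\<lambda>z. if Qf psi psib b B h (fst z) (fst (snd z)) (snd (snd z)) then 1 else 0 :: ennreal) \<in> borel_measurable drgraph_space"
proof -
  have "(\<lambda>z. if Qf psi psib b B h (fst z) (fst p) (snd p) then 1 else 0 :: ennreal) \<in> borel_measurable drgraph_space" for p :: "nat \<times> nat"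
  proof -
    have "Measurable.pred drgraph_space (\<lambda>z. Qf psi psib b B h (fst z) (fst p) (snd p))"
      unfolding drgraph_space_def by (rule measurable_compose[OF measurable_fst pred_Qf_G[OF assms]])
    then show ?thesis by measurable
  qed
  moreover have "snd \<in> measurable drgraph_space (count_space UNIV)"
  proof -
    have "count_space (UNIV::nat set) \<Otimes>\<^sub>M count_space (UNIV::nat set) = count_space UNIV"
      using pair_measure_countable[of "UNIV::nat set" "UNIV::nat set"] by simp
    then show ?thesis unfolding drgraph_space_def using measurable_snd
      by metis
  qed
  ultimately show ?thesis by (rule measurable_compose_countable)
qed

lemma Qf_inv:
  assumes inv: "invariant2 h" and d: "driso G a b G' a' b'"
  shows "Qf psi psib \<beta> BB h G a b = Qf psi psib \<beta> BB h G' a' b'"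
proof -
  define C where "C = comp G a"
  define C' where "C' = comp G' a'"
  obtain f where bC: "b \<in> C" and bC': "b' \<in> C'" and bij: "bij_betw f C C'"
    and pres: "\<And>u v. u \<in> C \<Longrightarrow> v \<in> C \<Longrightarrow> G u v \<longleftrightarrow> G' (f u) (f v)"
    and fa: "f a = a'" and fb: "f b = b'"
    using d unfolding driso_def C_def C'_def by blast
  have aC: "a \<in> C" unfolding C_def by (rule comp_refl)
  have aC': "a' \<in> C'" unfolding C'_def by (rule comp_refl)
  have img: "f ` C = C'" using bij by (simp add: bij_betw_def)
  have inj: "inj_on f C" using bij by (simp add: bij_betw_def)
  have nC: "v \<in> C" if "G b v" for v using comp_step[OF bC[unfolded C_def] that] C_def by simp
  have nC': "v \<in> C'" if "G' b' v" for v using comp_step[OF bC'[unfolded C'_def] that] C'_def by simp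
  have e1: "G a b \<longleftrightarrow> G' a' b'" using pres[OF aC bC] fa fb by simp
  have e2: "G b a \<longleftrightarrow> G' b' a'" using pres[OF bC aC] fa fb by simp
  have e3: "(\<forall>v. G b v \<longrightarrow> G v b) \<longleftrightarrow> (\<forall>v. G' b' v \<longrightarrow> G' v b')"
  proof
    assume A: "\<forall>v. G b v \<longrightarrow> G v b"
    show "\<forall>v. G' b' v \<longrightarrow> G' v b'"
    proof (intro allI impI)
      fix v' assume v': "G' b' v'"
      then have "v' \<in> C'" by (rule nC')
      then obtain v where v: "v \<in> C" "f v = v'" using img by blast
      then have "G b v" using pres[OF bC v(1)] fb v' by simp
      then have "G v b" using A by blast
      then show "G' v' b'" using pres[OF v(1) bC] fb v by simp
    qed
  next
    assume A: "\<forall>v. G' b' v \<longrightarrow> G' v b'"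
    show "\<forall>v. G b v \<longrightarrow> G v b"
    proof (intro allI impI)
      fix v assume v: "G b v"
      then have vC: "v \<in> C" by (rule nC)
      then have "G' b' (f v)" using pres[OF bC vC] fb v by simp
      then have "G' (f v) b'" using A by blast
      then show "G v b" using pres[OF vC bC] fb by simp
    qed
  qed
  have e4: "bp_at psi psib \<beta> BB h G b a \<longleftrightarrow> bp_at psi psib \<beta> BB h G' b' a'"
    if base: "G a b" "G b a" "\<forall>v. G b v \<longrightarrow> G v b"
  proof -
    have base': "G' a' b'" "G' b' a'" "\<forall>v. G' b' v \<longrightarrow> G' v b'" using base e1 e2 e3 by auto
    have Cb: "comp G b = C" unfolding C_def
      by (rule comp_eq[OF bC[unfolded C_def] comp_edge[of G b a, OF base(2)]])
    have Cb': "comp G' b' = C'" unfolding C'_def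
      by (rule comp_eq[OF bC'[unfolded C'_def] comp_edge[of G' b' a', OF base'(2)]])
    have hv: "h G v b = h G' (f v) b'" if v: "v \<in> nbrs G b" for v
    proof -
      have Gbv: "G b v" using v by (simp add: nbrs_def)
      have vC: "v \<in> C" using nC[OF Gbv] .
      have Gvb: "G v b" using base(3) Gbv by blast
      have G'vb: "G' (f v) b'" using pres[OF vC bC] Gvb fb by simp
      have cv: "comp G v = C" unfolding C_def
        by (rule comp_eq[OF vC[unfolded C_def] comp_trans[OF comp_edge[of G v b, OF Gvb] comp_edge[of G b a, OF base(2)]]])
      have fvC': "f v \<in> C'" using img vC by blast
      have cv': "comp G' (f v) = C'" unfolding C'_def
        by (rule comp_eq[OF fvC'[unfolded C'_def] comp_trans[OF comp_edge[of G' "f v" b', OF G'vb] comp_edge[of G' b' a', OF base'(2)]]])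
      have "driso G v b G' (f v) b'" unfolding driso_def cv cv'
        using comp_edge[of G v b, OF Gvb] comp_edge[of G' "f v" b', OF G'vb] bij pres fb by (auto simp: cv cv')
      then show ?thesis using inv unfolding invariant2_def by blast
    qed
    have hba: "h G b a = h G' b' a'"
    proof -
      have "driso G b a G' b' a'" unfolding driso_def Cb Cb'
        using comp_edge[of G b a, OF base(2)] comp_edge[of G' b' a', OF base'(2)] bij pres fb fa by (auto simp: Cb Cb')
      then show ?thesis using inv unfolding invariant2_def by blast
    qed
    have sub: "nbrs G b - {a} \<subseteq> C" using nC by (auto simp: nbrs_def)
    have injN: "inj_on f (nbrs G b - {a})" using inj_on_subset[OF inj sub] .
    have imgN: "f ` (nbrs G b - {a}) = nbrs G' b' - {a'}"
    proof
      show "f ` (nbrs G b - {a}) \<subseteq> nbrs G' b' - {a'}"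
      proof
        fix v' assume "v' \<in> f ` (nbrs G b - {a})"
        then obtain v where v: "v \<in> nbrs G b" "v \<noteq> a" "v' = f v" by blast
        have vC: "v \<in> C" using v sub by blast
        have "G' b' v'" using pres[OF bC vC] v fb by (simp add: nbrs_def)
        moreover have "v' \<noteq> a'" using v inj vC aC fa by (metis inj_on_def)
        ultimately show "v' \<in> nbrs G' b' - {a'}" by (simp add: nbrs_def)
      qed
    next
      show "nbrs G' b' - {a'} \<subseteq> f ` (nbrs G b - {a})"
      proof
        fix v' assume v': "v' \<in> nbrs G' b' - {a'}"
        then have "v' \<in> C'" using nC' by (simp add: nbrs_def)
        then obtain v where v: "v \<in> C" "f v = v'" using img by blast
        have "G b v" using pres[OF bC v(1)] v' v fb by (simp add: nbrs_def)
        moreover have "v \<noteq> a" using v v' fa by auto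
        ultimately show "v' \<in> f ` (nbrs G b - {a})" using v by (auto simp: nbrs_def)
      qed
    qed
    have P: "(\<Prod>v\<in>nbrs G' b' - {a'}. \<Sum>sv\<in>UNIV. psi \<beta> s sv * h G' v b' sv) =
             (\<Prod>v\<in>nbrs G b - {a}. \<Sum>sv\<in>UNIV. psi \<beta> s sv * h G v b sv)" for s
    proof -
      have "(\<Prod>v\<in>nbrs G' b' - {a'}. \<Sum>sv\<in>UNIV. psi \<beta> s sv * h G' v b' sv) =
            (\<Prod>v\<in>nbrs G b - {a}. \<Sum>sv\<in>UNIV. psi \<beta> s sv * h G' (f v) b' sv)"
        unfolding imgN[symmetric] using prod.reindex[OF injN] by simp
      also have "\<dots> = (\<Prod>v\<in>nbrs G b - {a}. \<Sum>sv\<in>UNIV. psi \<beta> s sv * h G v b sv)"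
        by (rule prod.cong) (auto simp: hv)
      finally show ?thesis .
    qed
    show ?thesis unfolding bp_at_def P hba ..
  qed
  show ?thesis unfolding Qf_def using e1 e2 e3 e4 by blast
qed



lemma pred_exQf:
  assumes "is_message h"
  shows "Measurable.pred rgraph_space (\<lambda>z. \<exists>x. Qf psi psib \<beta> BB h (fst z) x (snd z))"
proof -
  have "Measurable.pred rgraph_space (\<lambda>z. Qf psi psib \<beta> BB h (fst z) x r)" for x r
    unfolding rgraph_space_def by (rule measurable_compose[OF measurable_fst pred_Qf_G[OF assms]])
  then have "Measurable.pred rgraph_space (\<lambda>z. Qf psi psib \<beta> BB h (fst z) x (snd z))" for x
    by (rule measurable_compose_countable) (simp add: rgraph_space_def)
  then show ?thesis by (rule pred_intros_countable(2))
qed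

lemma reverse_bp:
  assumes U: "unimod_prob_on_trees \<mu>" and hm: "is_message h"
    and up: "AE_up \<mu> (bp_at psi psib \<beta> BB h)"
  shows "AE z in \<mu>. \<forall>j\<in>nbrs (fst z) (snd z). bp_at psi psib \<beta> BB h (fst z) (snd z) j"
proof -
  have sets: "sets \<mu> = sets rgraph_space" and tree: "AE z in \<mu>. is_lf_tree (fst z) (snd z)"
    and um: "unimodular \<mu>" using U unfolding unimod_prob_on_trees_def by auto
  define f where "f z = (if Qf psi psib \<beta> BB h (fst z) (fst (snd z)) (snd (snd z)) then 1 else 0 :: ennreal)" for z
  have fm: "f \<in> borel_measurable drgraph_space" unfolding f_def by (rule meas_F[OF hm])
  have finv: "invariant2 (\<lambda>G a b. f (G, a, b))"
  proof -
    have hinv: "invariant2 h" using hm unfolding is_message_def by blast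
    show ?thesis unfolding invariant2_def f_def
      using Qf_inv[OF hinv, where psi=psi and psib=psib and \<beta>=\<beta> and BB=BB] by simp
  qed
  have eq: "(\<integral>\<^sup>+ z. (\<integral>\<^sup>+ x. f (fst z, snd z, x) \<partial>count_space (comp (fst z) (snd z))) \<partial>\<mu>) =
        (\<integral>\<^sup>+ z. (\<integral>\<^sup>+ x. f (fst z, x, snd z) \<partial>count_space (comp (fst z) (snd z))) \<partial>\<mu>)"
    using um fm finv unfolding unimodular_def by blast
  have "AE z in \<mu>. (\<integral>\<^sup>+ x. f (fst z, snd z, x) \<partial>count_space (comp (fst z) (snd z))) = 0"
    using up unfolding AE_up_def
  proof (rule AE_mp[OF _ AE_I2], intro impI)
    fix z assume A: "\<forall>j\<in>nbrs (fst z) (snd z). bp_at psi psib \<beta> BB h (fst z) j (snd z)"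
    have "f (fst z, snd z, x) = 0" for x
      using A unfolding f_def Qf_def by (auto simp: nbrs_def)
    then show "(\<integral>\<^sup>+ x. f (fst z, snd z, x) \<partial>count_space (comp (fst z) (snd z))) = 0" by simp
  qed
  then have L0: "(\<integral>\<^sup>+ z. (\<integral>\<^sup>+ x. f (fst z, snd z, x) \<partial>count_space (comp (fst z) (snd z))) \<partial>\<mu>) = 0"
    by (simp add: nn_integral_cong_AE)
  define E where "E = {z \<in> space \<mu>. \<exists>x. Qf psi psib \<beta> BB h (fst z) x (snd z)}"
  have Em: "E \<in> sets \<mu>"
  proof -
    have "Measurable.pred \<mu> (\<lambda>z. \<exists>x. Qf psi psib \<beta> BB h (fst z) x (snd z))"
      using pred_exQf[OF hm, of psi psib \<beta> BB] by (simp add: pred_def sets_eq_imp_space_eq[OF sets] sets)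
    then show ?thesis unfolding E_def pred_def .
  qed
  have "emeasure \<mu> E = (\<integral>\<^sup>+ z. indicator E z \<partial>\<mu>)" using Em by simp
  also have "\<dots> \<le> (\<integral>\<^sup>+ z. (\<integral>\<^sup>+ x. f (fst z, x, snd z) \<partial>count_space (comp (fst z) (snd z))) \<partial>\<mu>)"
  proof (rule nn_integral_mono)
    fix z assume "z \<in> space \<mu>"
    show "indicator E z \<le> (\<integral>\<^sup>+ x. f (fst z, x, snd z) \<partial>count_space (comp (fst z) (snd z)))"
    proof (cases "z \<in> E")
      case False then show ?thesis by simp
    next
      case True
      then obtain x where x: "Qf psi psib \<beta> BB h (fst z) x (snd z)" unfolding E_def by blast
      have xC: "x \<in> comp (fst z) (snd z)" using x unfolding Qf_def by (auto intro: comp_edge)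
      have "(\<integral>\<^sup>+ y. indicator {x} y \<partial>count_space (comp (fst z) (snd z))) \<le>
            (\<integral>\<^sup>+ y. f (fst z, y, snd z) \<partial>count_space (comp (fst z) (snd z)))"
        by (rule nn_integral_mono) (use x in \<open>auto simp: f_def indicator_def\<close>)
      moreover have "(\<integral>\<^sup>+ y. indicator {x} y \<partial>count_space (comp (fst z) (snd z))) = 1"
        using xC by (subst nn_integral_indicator) auto
      ultimately show ?thesis using True by simp
    qed
  qed
  also have "\<dots> = 0" using eq L0 by simp
  finally have "E \<in> null_sets \<mu>" using Em by (simp add: null_sets_def)
  then have nE: "AE z in \<mu>. z \<notin> E" by (rule AE_not_in)
  show ?thesis
  proof (rule AE_mp[OF AE_conjI[OF AE_conjI[OF nE tree] AE_space]], rule AE_I2, intro impI ballI)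
    fix z j assume A: "(z \<notin> E \<and> is_lf_tree (fst z) (snd z)) \<and> z \<in> space \<mu>" and j: "j \<in> nbrs (fst z) (snd z)"
    have nq: "\<not> Qf psi psib \<beta> BB h (fst z) j (snd z)" using A unfolding E_def by blast
    have sym: "\<forall>v. fst z (snd z) v \<longleftrightarrow> fst z v (snd z)"
      using A comp_refl unfolding is_lf_tree_def by blast
    show "bp_at psi psib \<beta> BB h (fst z) (snd z) j"
      using nq sym j unfolding Qf_def nbrs_def by blast
  qed
qed



lemma integ_bound:
  fixes f g :: "'a \<Rightarrow> real"
  assumes P: "prob_space \<mu>" and ig: "integrable \<mu> g" and fm: "f \<in> borel_measurable \<mu>"
    and bd: "AE z in \<mu>. \<bar>f z\<bar> \<le> c * (g z + 1)" and c: "0 \<le> c"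
  shows "integrable \<mu> f \<and> \<bar>integral\<^sup>L \<mu> f\<bar> \<le> c * integral\<^sup>L \<mu> g + c"
proof -
  interpret prob_space \<mu> by (rule P)
  define k where "k z = c * g z + c" for z
  have ik: "integrable \<mu> k" unfolding k_def using ig by auto
  have bd': "AE z in \<mu>. \<bar>f z\<bar> \<le> k z" using bd unfolding k_def by (simp add: algebra_simps)
  have "AE z in \<mu>. norm (f z) \<le> norm (k z)"
    using bd' by eventually_elim auto
  then have i: "integrable \<mu> f" by (rule Bochner_Integration.integrable_bound[OF ik fm])
  have "\<bar>integral\<^sup>L \<mu> f\<bar> \<le> integral\<^sup>L \<mu> (\<lambda>z. norm (f z))"
    using integral_norm_bound[of \<mu> f] by simp
  also have "\<dots> \<le> integral\<^sup>L \<mu> k"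
    by (rule integral_mono_AE) (use i ik bd' in auto)
  also have "\<dots> = c * integral\<^sup>L \<mu> g + c" unfolding k_def using ig prob_space by simp
  finally show ?thesis using i by simp
qed

theorem mainTheorem9:
  fixes psi :: "real \<Rightarrow> 'x::finite \<Rightarrow> 'x \<Rightarrow> real"
    and psib :: "real \<Rightarrow> 'x \<Rightarrow> real"
    and \<mu> :: "(graph \<times> nat) measure"
    and K :: "(real \<times> real) set"
  assumes "H1 psi psib"
    and "unimod_prob_on_trees \<mu>"
    and "compact K"
  shows "\<exists>C::real.
     (\<forall>(b, B)\<in>K. \<forall>h\<in>Hstar \<mu> psi psib b B.
        AE z in \<mu>. \<bar>Phi psi psib b B h (fst z) (snd z)\<bar> \<le> C * (real (deg (fst z) (snd z))^2 + 1)) \<and>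
     ((\<forall>b s s'. 0 < psi b s s') \<longrightarrow>
        (\<forall>(b, B)\<in>K. \<forall>h. is_message h \<longrightarrow> (\<forall>G r. is_lf_tree G r \<longrightarrow>
           \<bar>Phi psi psib b B h G r\<bar> \<le> C * (real (deg G r) + 1)))) \<and>
     (integrable \<mu> (\<lambda>z. real (deg (fst z) (snd z))^2) \<longrightarrow>
        (\<exists>C'::real. \<forall>(b, B)\<in>K. \<forall>h\<in>Hstar \<mu> psi psib b B.
           integrable \<mu> (\<lambda>z. Phi psi psib b B h (fst z) (snd z)) \<and> \<bar>Phi_mu \<mu> psi psib b B h\<bar> \<le> C')) \<and>
     ((\<forall>b s s'. 0 < psi b s s') \<longrightarrow> integrable \<mu> (\<lambda>z. real (deg (fst z) (snd z))) \<longrightarrow>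
        (\<exists>C'::real. \<forall>(b, B)\<in>K. \<forall>h. is_message h \<longrightarrow>
           integrable \<mu> (\<lambda>z. Phi psi psib b B h (fst z) (snd z)) \<and> \<bar>Phi_mu \<mu> psi psib b B h\<bar> \<le> C'))"
proof -
  note H = assms(1) and U = assms(2)
  have P: "prob_space \<mu>" and sets: "sets \<mu> = sets rgraph_space"
    and tree: "AE z in \<mu>. is_lf_tree (fst z) (snd z)"
    using U unfolding unimod_prob_on_trees_def by auto
  have S1: "compact (fst ` K)" and S2: "compact (snd ` K)"
    using assms(3) by (auto intro: compact_fst_img compact_snd_img)
  from H1_constants[OF H S1 S2] obtain sp M m pblo pbhi where
    c: "1 \<le> M" "0 < m" "m \<le> 1" "0 < pblo" "pblo \<le> 1" "1 \<le> pbhi" and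
    cpsi: "\<forall>b\<in>fst ` K. \<forall>s s'. 0 \<le> psi b s s' \<and> psi b s s' \<le> M" and
    cm: "\<forall>b\<in>fst ` K. \<forall>s. m \<le> psi b s sp \<and> m \<le> psi b sp s" and
    cpb: "\<forall>B\<in>snd ` K. \<forall>s. pblo \<le> psib B s \<and> psib B s \<le> pbhi"
    by blast
  define L where "L = LL TYPE('x) M m pblo pbhi"
  have L0: "0 \<le> L" unfolding L_def by (rule LL_parts(5)[OF c])
  define Ca where "Ca = 2 * L"
  have Ca0: "0 \<le> Ca" using L0 Ca_def by simp
  have msgd: "\<forall>G x y. (\<forall>s. 0 \<le> h G x y s) \<and> (\<Sum>s\<in>UNIV. h G x y s) = 1" if "is_message h" for h :: "graph \<Rightarrow> nat \<Rightarrow> nat \<Rightarrow> 'x \<Rightarrow> real"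
    using that unfolding is_message_def by blast
  have bdA: "AE z in \<mu>. \<bar>Phi psi psib b B h (fst z) (snd z)\<bar> \<le> Ca * (real (deg (fst z) (snd z))^2 + 1)"
    if bB: "(b, B) \<in> K" and hH: "h \<in> Hstar \<mu> psi psib b B" for b B h
  proof -
    have hm: "is_message h" and up: "AE_up \<mu> (bp_at psi psib b B h)" using hH unfolding Hstar_def by auto
    have b1: "b \<in> fst ` K" and B1: "B \<in> snd ` K" using bB by force+
    have psiM: "\<forall>s s'. 0 \<le> psi b s s' \<and> psi b s s' \<le> M" using cpsi b1 by blast
    have psim: "\<forall>s. m \<le> psi b sp s" using cm b1 by blast
    have pb: "\<forall>s. pblo \<le> psib B s \<and> psib B s \<le> pbhi" using cpb B1 by blast
    show ?thesis
      using AE_conjI[OF reverse_bp[OF U hm up] tree]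
    proof eventually_elim
      case (elim z)
      have fin: "finite (nbrs (fst z) (snd z))" using elim comp_refl unfolding is_lf_tree_def by blast
      have bp: "\<forall>j\<in>nbrs (fst z) (snd z). bp_at psi psib b B h (fst z) (snd z) j" using elim by blast
      show ?case using Phi_bound_a[OF msgd[OF hm] fin bp psiM psim c pb]
        unfolding Ca_def L_def by simp
    qed
  qed
  have "\<exists>Cb\<ge>0. (\<forall>b s s'. 0 < psi b s s') \<longrightarrow>
        (\<forall>(b, B)\<in>K. \<forall>h. is_message h \<longrightarrow> (\<forall>G r. is_lf_tree G r \<longrightarrow>
           \<bar>Phi psi psib b B h G r\<bar> \<le> Cb * (real (deg G r) + 1)))"
  proof (cases "\<forall>b s s'. 0 < psi b s s'")
    case False then show ?thesis by auto
  next
    case True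
    obtain mm where mm: "0 < mm" "mm \<le> 1" "\<forall>b\<in>fst ` K. \<forall>s s'. mm \<le> psi b s s'"
      using H1_constants_pos[OF H S1 True] by blast
    define Cb where "Cb = L + (ln M - ln mm)"
    have "0 \<le> ln M - ln mm" using c mm by simp
    then have Cb0: "0 \<le> Cb" using L0 Cb_def by simp
    have "\<bar>Phi psi psib b B h G r\<bar> \<le> Cb * (real (deg G r) + 1)"
      if bB: "(b, B) \<in> K" and hm: "is_message h" and tr: "is_lf_tree G r" for b B h G r
    proof -
      have b1: "b \<in> fst ` K" and B1: "B \<in> snd ` K" using bB by force+
      have psiM: "\<forall>s s'. 0 \<le> psi b s s' \<and> psi b s s' \<le> M" using cpsi b1 by blast
      have psim: "\<forall>s. m \<le> psi b sp s" using cm b1 by blast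
      have pb: "\<forall>s. pblo \<le> psib B s \<and> psib B s \<le> pbhi" using cpb B1 by blast
      have psimm: "\<forall>s s'. mm \<le> psi b s s'" using mm b1 by blast
      have fin: "finite (nbrs G r)" using tr comp_refl unfolding is_lf_tree_def by blast
      show ?thesis using Phi_bound_b[where h=h and G=G and r=r and psi=psi and b=b and B=B and psib=psib, OF msgd[OF hm] fin psiM psim psimm mm(1,2) c pb]
        unfolding Cb_def L_def by simp
    qed
    then show ?thesis using Cb0 by blast
  qed
  then obtain Cb where Cb0: "0 \<le> Cb" and bdB: "(\<forall>b s s'. 0 < psi b s s') \<longrightarrow>
        (\<forall>(b, B)\<in>K. \<forall>h. is_message h \<longrightarrow> (\<forall>G r. is_lf_tree G r \<longrightarrow>
           \<bar>Phi psi psib b B h G r\<bar> \<le> Cb * (real (deg G r) + 1)))" by blast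
  define C where "C = max Ca Cb"
  have partA: "\<forall>(b, B)\<in>K. \<forall>h\<in>Hstar \<mu> psi psib b B.
        AE z in \<mu>. \<bar>Phi psi psib b B h (fst z) (snd z)\<bar> \<le> C * (real (deg (fst z) (snd z))^2 + 1)"
  proof (intro ballI, clarify)
    fix b B h assume bB: "(b, B) \<in> K" and hH: "h \<in> Hstar \<mu> psi psib b B"
    show "AE z in \<mu>. \<bar>Phi psi psib b B h (fst z) (snd z)\<bar> \<le> C * (real (deg (fst z) (snd z))^2 + 1)"
      using bdA[OF bB hH]
    proof eventually_elim
      case (elim z)
      have "Ca * (real (deg (fst z) (snd z))^2 + 1) \<le> C * (real (deg (fst z) (snd z))^2 + 1)"
        unfolding C_def by (intro mult_right_mono) auto
      then show ?case using elim by linarith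
    qed
  qed
  have partB: "(\<forall>b s s'. 0 < psi b s s') \<longrightarrow>
        (\<forall>(b, B)\<in>K. \<forall>h. is_message h \<longrightarrow> (\<forall>G r. is_lf_tree G r \<longrightarrow>
           \<bar>Phi psi psib b B h G r\<bar> \<le> C * (real (deg G r) + 1)))"
  proof (intro impI ballI allI, clarify)
    fix b B and h :: "graph \<Rightarrow> nat \<Rightarrow> nat \<Rightarrow> 'x \<Rightarrow> real" and G r assume pos: "\<forall>b s s'. 0 < psi b s s'" and bB: "(b, B) \<in> K" and hm: "is_message h"
      and tr: "is_lf_tree G r"
    have "\<bar>Phi psi psib b B h G r\<bar> \<le> Cb * (real (deg G r) + 1)" using bdB pos bB hm tr by blast
    moreover have "Cb * (real (deg G r) + 1) \<le> C * (real (deg G r) + 1)"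
      unfolding C_def by (intro mult_right_mono) auto
    ultimately show "\<bar>Phi psi psib b B h G r\<bar> \<le> C * (real (deg G r) + 1)" by linarith
  qed
  have measPhi: "(\<lambda>z. Phi psi psib b B h (fst z) (snd z)) \<in> borel_measurable \<mu>" if "is_message h" for b B and h :: "graph \<Rightarrow> nat \<Rightarrow> nat \<Rightarrow> 'x \<Rightarrow> real"
    unfolding measurable_cong_sets[OF sets refl] by (rule meas_Phi[OF that])
  have partC: "integrable \<mu> (\<lambda>z. real (deg (fst z) (snd z))^2) \<longrightarrow>
        (\<exists>C'::real. \<forall>(b, B)\<in>K. \<forall>h\<in>Hstar \<mu> psi psib b B.
           integrable \<mu> (\<lambda>z. Phi psi psib b B h (fst z) (snd z)) \<and> \<bar>Phi_mu \<mu> psi psib b B h\<bar> \<le> C')"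
  proof
    assume ig: "integrable \<mu> (\<lambda>z. real (deg (fst z) (snd z))^2)"
    show "\<exists>C'::real. \<forall>(b, B)\<in>K. \<forall>h\<in>Hstar \<mu> psi psib b B.
           integrable \<mu> (\<lambda>z. Phi psi psib b B h (fst z) (snd z)) \<and> \<bar>Phi_mu \<mu> psi psib b B h\<bar> \<le> C'"
    proof (intro exI[of _ "Ca * integral\<^sup>L \<mu> (\<lambda>z. real (deg (fst z) (snd z))^2) + Ca"] ballI, clarify)
      fix b B h assume bB: "(b, B) \<in> K" and hH: "h \<in> Hstar \<mu> psi psib b B"
      have hm: "is_message h" using hH unfolding Hstar_def by auto
      from integ_bound[OF P ig measPhi[OF hm] bdA[OF bB hH] Ca0]
      show "integrable \<mu> (\<lambda>z. Phi psi psib b B h (fst z) (snd z)) \<and>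
         \<bar>Phi_mu \<mu> psi psib b B h\<bar> \<le> Ca * integral\<^sup>L \<mu> (\<lambda>z. real (deg (fst z) (snd z))^2) + Ca"
        unfolding Phi_mu_def .
    qed
  qed
  have partD: "(\<forall>b s s'. 0 < psi b s s') \<longrightarrow> integrable \<mu> (\<lambda>z. real (deg (fst z) (snd z))) \<longrightarrow>
        (\<exists>C'::real. \<forall>(b, B)\<in>K. \<forall>h. is_message h \<longrightarrow>
           integrable \<mu> (\<lambda>z. Phi psi psib b B h (fst z) (snd z)) \<and> \<bar>Phi_mu \<mu> psi psib b B h\<bar> \<le> C')"
  proof (intro impI)
    assume pos: "\<forall>b s s'. 0 < psi b s s'" and ig: "integrable \<mu> (\<lambda>z. real (deg (fst z) (snd z)))"
    show "\<exists>C'::real. \<forall>(b, B)\<in>K. \<forall>h. is_message h \<longrightarrow>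
           integrable \<mu> (\<lambda>z. Phi psi psib b B h (fst z) (snd z)) \<and> \<bar>Phi_mu \<mu> psi psib b B h\<bar> \<le> C'"
    proof (intro exI[of _ "Cb * integral\<^sup>L \<mu> (\<lambda>z. real (deg (fst z) (snd z))) + Cb"] ballI allI impI, clarify)
      fix b B and h :: "graph \<Rightarrow> nat \<Rightarrow> nat \<Rightarrow> 'x \<Rightarrow> real" assume bB: "(b, B) \<in> K" and hm: "is_message h"
      have bd: "AE z in \<mu>. \<bar>Phi psi psib b B h (fst z) (snd z)\<bar> \<le> Cb * (real (deg (fst z) (snd z)) + 1)"
        using tree
      proof eventually_elim
        case (elim z) then show ?case using bdB pos bB hm by blast
      qed
      from integ_bound[OF P ig measPhi[OF hm] bd Cb0]
      show "integrable \<mu> (\<lambda>z. Phi psi psib b B h (fst z) (snd z)) \<and>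
         \<bar>Phi_mu \<mu> psi psib b B h\<bar> \<le> Cb * integral\<^sup>L \<mu> (\<lambda>z. real (deg (fst z) (snd z))) + Cb"
        unfolding Phi_mu_def .
    qed
  qed
  show ?thesis using partA partB partC partD by blast
qed

end
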